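(* Let $\mathcal{A}$ be a clone that admits no minion homomorphism to $\mathcal{P}$. Then there exists a finite graph $\mathbb{G}$ that is not 3-colorable such that $\mathcal{A}$ satisfies $\Sigma_{\mathbb{G}}$.
   Context: A graph is a structure $(V,E)$ with a single symmetric binary relation $E$ (loops allowed); it is 3-colorable if it admits a homomorphism to the complete loopless graph $\mathbb{K}_3$ on three vertices. A clone on a set $A$ is a set of finitary operations on $A$ containing all projections and closed under composition; $\mathcal{P}$ is the clone of projections on $\{0,1\}$. A minion homomorphism between clones $\mathcal{A}\to\mathcal{B}$ is an arity-preserving map $\xi$ such that for all $n$-ary $f\in\mathcal{A}$ and all $\pi:\{1,\dots,n\}\to\{1,\dots,k\}$, $\xi$ maps $(x_1,\dots,x_k)\mapsto f(x_{\pi(1)},\dots,x_{\pi(n)})$ to $(x_1,\dots,x_k)\mapsto \xi(f)(x_{\pi(1)},\dots,x_{\pi(n)})$. A clone satisfies a height 1 condition (finite set of universally quantified identities $f(x_{\pi(1)},\dots,x_{\pi(n)})\approx g(x_{\rho(1)},\dots,x_{\rho(m)})$) if its symbols can be assigned functions of the clone of the right arities making all identities true. For a finite graph $\mathbb{G}=(V,E)$, $\Sigma_{\mathbb{G}}$ is the height 1 condition with a ternary symbol $f_v$ for each $v\in V$, a $6$-ary symbol $g_{(u,v)}$ for each $(u,v)\in E$, and, for each $(u,v)\in E$, the identities $f_u(x,y,z)\approx g_{(u,v)}(x,y,x,z,y,z)$ and $f_v(x,y,z)\approx g_{(u,v)}(y,x,z,x,z,y)$. *)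

theory Defs
  imports Main
begin

text \<open>An n-ary operation on a set A is represented canonically as a function on lists:
  it is defined on lists of length n with entries in A, takes values in A, and is
  undefined elsewhere. Coordinates are 0-indexed.\<close>

definition restr :: "'a set \<Rightarrow> nat \<Rightarrow> ('a list \<Rightarrow> 'a) \<Rightarrow> ('a list \<Rightarrow> 'a)" where
  "restr A n h = (\<lambda>xs. if length xs = n \<and> set xs \<subseteq> A then h xs else undefined)"

definition op_on :: "'a set \<Rightarrow> nat \<Rightarrow> ('a list \<Rightarrow> 'a) \<Rightarrow> bool" where
  "op_on A n f \<longleftrightarrow>
     (\<forall>xs. length xs = n \<and> set xs \<subseteq> A \<longrightarrow> f xs \<in> A) \<and>
     (\<forall>xs. \<not> (length xs = n \<and> set xs \<subseteq> A) \<longrightarrow> f xs = undefined)"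

definition proj :: "'a set \<Rightarrow> nat \<Rightarrow> nat \<Rightarrow> ('a list \<Rightarrow> 'a)" where
  "proj A n i = restr A n (\<lambda>xs. xs ! i)"

definition compose :: "'a set \<Rightarrow> nat \<Rightarrow> nat \<Rightarrow> ('a list \<Rightarrow> 'a) \<Rightarrow> (nat \<Rightarrow> 'a list \<Rightarrow> 'a) \<Rightarrow> ('a list \<Rightarrow> 'a)" where
  "compose A n m f gs = restr A m (\<lambda>xs. f (map (\<lambda>i. gs i xs) [0..<n]))"

definition clone :: "'a set \<Rightarrow> (nat \<Rightarrow> ('a list \<Rightarrow> 'a) set) \<Rightarrow> bool" where
  "clone A C \<longleftrightarrow>
     (\<forall>n f. f \<in> C n \<longrightarrow> op_on A n f) \<and>
     (\<forall>n i. i < n \<longrightarrow> proj A n i \<in> C n) \<and>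
     (\<forall>n m f gs. f \<in> C n \<longrightarrow> (\<forall>i<n. gs i \<in> C m) \<longrightarrow> compose A n m f gs \<in> C m)"

definition minor :: "'a set \<Rightarrow> nat \<Rightarrow> nat \<Rightarrow> (nat \<Rightarrow> nat) \<Rightarrow> ('a list \<Rightarrow> 'a) \<Rightarrow> ('a list \<Rightarrow> 'a)" where
  "minor A n k \<pi> f = restr A k (\<lambda>xs. f (map (\<lambda>i. xs ! \<pi> i) [0..<n]))"

text \<open>The clone P of projections on {0,1} (represented by the type bool).\<close>
definition proj_clone :: "nat \<Rightarrow> (bool list \<Rightarrow> bool) set" where
  "proj_clone n = {proj UNIV n i | i. i < n}"

definition minion_hom ::
  "'a set \<Rightarrow> (nat \<Rightarrow> ('a list \<Rightarrow> 'a) set) \<Rightarrow> 'b set \<Rightarrow> (nat \<Rightarrow> ('b list \<Rightarrow> 'b) set)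
    \<Rightarrow> (nat \<Rightarrow> ('a list \<Rightarrow> 'a) \<Rightarrow> ('b list \<Rightarrow> 'b)) \<Rightarrow> bool" where
  "minion_hom A C B D \<xi> \<longleftrightarrow>
     (\<forall>n f. f \<in> C n \<longrightarrow> \<xi> n f \<in> D n) \<and>
     (\<forall>n k \<pi> f. f \<in> C n \<longrightarrow> (\<forall>i<n. \<pi> i < k) \<longrightarrow>
        \<xi> k (minor A n k \<pi> f) = minor B n k \<pi> (\<xi> n f))"

definition graph :: "'v set \<Rightarrow> ('v \<times> 'v) set \<Rightarrow> bool" where
  "graph V E \<longleftrightarrow> finite V \<and> E \<subseteq> V \<times> V \<and> sym E"

definition three_colorable :: "'v set \<Rightarrow> ('v \<times> 'v) set \<Rightarrow> bool" where
  "three_colorable V E \<longleftrightarrow>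
     (\<exists>c :: 'v \<Rightarrow> nat. (\<forall>v\<in>V. c v < 3) \<and> (\<forall>(u,v)\<in>E. c u \<noteq> c v))"

definition satisfies_Sigma :: "'a set \<Rightarrow> (nat \<Rightarrow> ('a list \<Rightarrow> 'a) set) \<Rightarrow> 'v set \<Rightarrow> ('v \<times> 'v) set \<Rightarrow> bool" where
  "satisfies_Sigma A C V E \<longleftrightarrow>
     (\<exists>f :: 'v \<Rightarrow> ('a list \<Rightarrow> 'a). \<exists>g :: ('v \<times> 'v) \<Rightarrow> ('a list \<Rightarrow> 'a).
        (\<forall>v\<in>V. f v \<in> C 3) \<and> (\<forall>e\<in>E. g e \<in> C 6) \<and>
        (\<forall>(u,v)\<in>E. \<forall>x\<in>A. \<forall>y\<in>A. \<forall>z\<in>A.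
            f u [x,y,z] = g (u,v) [x,y,x,z,y,z] \<and>
            f v [x,y,z] = g (u,v) [y,x,z,x,z,y]))"

end

theory Submission
  imports Defs "HOL-Analysis.Function_Topology"
begin

lemma sat6:
  fixes x01 x10 x12 x21 x02 x20 A0 A1 A2 :: nat
  assumes "A0 \<noteq> A1" "A0 \<noteq> A2" "A1 \<noteq> A2"
    "x01 = A0 \<or> x01 = A1" "x10 = A1 \<or> x10 = A0" "x12 = A1 \<or> x12 = A2"
    "x21 = A2 \<or> x21 = A1" "x02 = A0 \<or> x02 = A2" "x20 = A2 \<or> x20 = A0"
    "x01 \<noteq> x10" "x01 \<noteq> x12" "x01 \<noteq> x20" "x12 \<noteq> x20"
    "x10 \<noteq> x02" "x10 \<noteq> x21" "x02 \<noteq> x21" "x12 \<noteq> x21" "x02 \<noteq> x20"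
  shows "(x10 = A1) = (x01 = A0)" "(x12 = A1) = (x01 = A0)" "(x21 = A2) = (x01 = A0)"
     "(x02 = A0) = (x01 = A0)" "(x20 = A2) = (x01 = A0)"
  using assms by metis+



definition e :: "nat \<Rightarrow> nat \<Rightarrow> nat set \<Rightarrow> nat \<Rightarrow> nat" where
  "e a b S = (\<lambda>j. if j \<in> S then a else b)"

locale k3 =
  fixes n :: nat and h :: "(nat \<Rightarrow> nat) \<Rightarrow> nat"
  assumes wd: "\<And>\<sigma> \<tau>. (\<forall>i<n. \<sigma> i = \<tau> i) \<Longrightarrow> h \<sigma> = h \<tau>"
    and rng: "\<And>\<sigma>. (\<forall>i<n. \<sigma> i < 3) \<Longrightarrow> h \<sigma> < 3"
    and adj: "\<And>\<sigma> \<tau>. (\<forall>i<n. \<sigma> i < 3) \<Longrightarrow> (\<forall>i<n. \<tau> i < 3) \<Longrightarrow> (\<forall>i<n. \<sigma> i \<noteq> \<tau> i) \<Longrightarrow> h \<sigma> \<noteq> h \<tau>"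
begin

definition P where "P S \<longleftrightarrow> h (e 0 1 S) = h (\<lambda>_. 0)"

lemma al_inj: "a < 3 \<Longrightarrow> b < 3 \<Longrightarrow> a \<noteq> b \<Longrightarrow> h (\<lambda>_. a) \<noteq> h (\<lambda>_. b)"
  by (rule adj) auto

lemma al_lt: "a < 3 \<Longrightarrow> h (\<lambda>_. a) < 3"
  by (rule rng) auto

lemma al_cover: "v < 3 \<Longrightarrow> v = h (\<lambda>_. 0) \<or> v = h (\<lambda>_. 1) \<or> v = h (\<lambda>_. 2)"
proof -
  assume "v < 3"
  moreover have "h (\<lambda>_. 0) < 3" "h (\<lambda>_. 1) < 3" "h (\<lambda>_. 2) < 3" by (auto intro: al_lt)
  moreover have "h (\<lambda>_. 0) \<noteq> h (\<lambda>_. 1)" "h (\<lambda>_. 0) \<noteq> h (\<lambda>_. 2)" "h (\<lambda>_. 1) \<noteq> h (\<lambda>_. 2)"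
    using al_inj[of 0 1] al_inj[of 0 2] al_inj[of 1 2] by auto
  ultimately show ?thesis by linarith
qed

lemma cons: assumes "\<forall>i<n. \<sigma> i < 3" shows "\<exists>j<n. h \<sigma> = h (\<lambda>_. \<sigma> j)"
proof -
  have "h \<sigma> < 3" using rng assms by blast
  then obtain c where c: "c < 3" "h \<sigma> = h (\<lambda>_. c)"
  proof -
    from al_cover[OF \<open>h \<sigma> < 3\<close>] have "\<exists>c::nat. c < 3 \<and> h \<sigma> = h (\<lambda>_. c)"
    proof (elim disjE)
      assume "h \<sigma> = h (\<lambda>_. 0)" then show ?thesis by (intro exI[of _ 0]) simp
    next
      assume "h \<sigma> = h (\<lambda>_. 1)" then show ?thesis by (intro exI[of _ 1]) simp
    next
      assume "h \<sigma> = h (\<lambda>_. 2)" then show ?thesis by (intro exI[of _ 2]) simp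
    qed
    then show ?thesis using that by blast
  qed
  show ?thesis
  proof (rule ccontr)
    assume "\<not> ?thesis"
    then have "\<forall>j<n. \<sigma> j \<noteq> c" using c by metis
    then have "h \<sigma> \<noteq> h (\<lambda>_. c)" using assms c by (intro adj) auto
    with c show False by simp
  qed
qed

lemma cons2: "a < 3 \<Longrightarrow> b < 3 \<Longrightarrow> h (e a b S) = h (\<lambda>_. a) \<or> h (e a b S) = h (\<lambda>_. b)"
proof -
  assume "a < 3" "b < 3"
  then have "\<forall>i<n. e a b S i < 3" by (simp add: e_def)
  from cons[OF this] obtain j where "h (e a b S) = h (\<lambda>_. e a b S j)" by blast
  then show ?thesis by (cases "j \<in> S") (auto simp: e_def)
qed

lemma adj_e: "a < 3 \<Longrightarrow> b < 3 \<Longrightarrow> c < 3 \<Longrightarrow> d < 3 \<Longrightarrow> a \<noteq> c \<Longrightarrow> b \<noteq> d \<Longrightarrow> h (e a b S) \<noteq> h (e c d S)"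
  by (rule adj) (auto simp: e_def)

lemma pair: assumes "a < 3" "b < 3" "a \<noteq> b" shows "(h (e a b S) = h (\<lambda>_. a)) = P S"
proof -
  have d: "h (\<lambda>_. 0) \<noteq> h (\<lambda>_. 1)" "h (\<lambda>_. 0) \<noteq> h (\<lambda>_. 2)" "h (\<lambda>_. 1) \<noteq> h (\<lambda>_. 2)"
    using al_inj[of 0 1] al_inj[of 0 2] al_inj[of 1 2] by auto
  note c = cons2[of 0 1 S] cons2[of 1 0 S] cons2[of 1 2 S] cons2[of 2 1 S] cons2[of 0 2 S] cons2[of 2 0 S]
  note j = adj_e[of 0 1 1 0 S] adj_e[of 0 1 1 2 S] adj_e[of 0 1 2 0 S] adj_e[of 1 2 2 0 S]
    adj_e[of 1 0 0 2 S] adj_e[of 1 0 2 1 S] adj_e[of 0 2 2 1 S] adj_e[of 1 2 2 1 S] adj_e[of 0 2 2 0 S]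
    adj_e[of 0 1 2 0 S] adj_e[of 1 0 2 1 S]
  have ab: "(a = 0 \<and> b = 1) \<or> (a = 1 \<and> b = 0) \<or> (a = 1 \<and> b = 2) \<or> (a = 2 \<and> b = 1) \<or> (a = 0 \<and> b = 2) \<or> (a = 2 \<and> b = 0)"
    using assms by arith
  have S: "(h (e 1 0 S) = h (\<lambda>_. 1)) = P S" "(h (e 1 2 S) = h (\<lambda>_. 1)) = P S"
    "(h (e 2 1 S) = h (\<lambda>_. 2)) = P S" "(h (e 0 2 S) = h (\<lambda>_. 0)) = P S"
    "(h (e 2 0 S) = h (\<lambda>_. 2)) = P S"
    unfolding P_def using sat6[OF d c(1-6) j(1-9)] by simp_all
  from ab show ?thesis unfolding P_def using S unfolding P_def by auto
qed

lemma compl: "P (-S) = (\<not> P S)"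
proof -
  have "e 0 1 (-S) = e 1 0 S" by (auto simp: e_def)
  moreover have "(h (e 1 0 S) = h (\<lambda>_. 1)) = P S" using pair[of 1 0 S] by simp
  moreover have "h (e 1 0 S) = h (\<lambda>_. 1) \<or> h (e 1 0 S) = h (\<lambda>_. 0)" using cons2[of 1 0 S] by simp
  moreover have "h (\<lambda>_. 0) \<noteq> h (\<lambda>_. 1)" using al_inj[of 0 1] by simp
  ultimately show ?thesis unfolding P_def by metis
qed

lemma P_empty: "\<not> P {}"
proof -
  have "e 0 1 {} = (\<lambda>_. 1)" by (simp add: e_def)
  then show ?thesis unfolding P_def using al_inj[of 0 1] by simp
qed

lemma P_cong: "(\<forall>j<n. (j \<in> S) = (j \<in> T)) \<Longrightarrow> P S = P T"
  unfolding P_def by (metis e_def wd)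

lemma up: assumes "P S" "S \<subseteq> R" shows "P R"
proof (rule ccontr)
  assume "\<not> P R"
  hence PR: "P (-R)" by (simp add: compl)
  define \<sigma> where "\<sigma> = (\<lambda>j. if j \<in> S then 0 else if j \<in> R then 2 else (1::nat))"
  have v: "\<forall>i<n. \<sigma> i < 3" by (simp add: \<sigma>_def)
  have p1: "h \<sigma> \<noteq> h (e 1 0 S)" by (rule adj) (auto simp: \<sigma>_def e_def)
  have q1: "h (e 1 0 S) = h (\<lambda>_. 1)" using pair[of 1 0 S] \<open>P S\<close> by simp
  have p2: "h \<sigma> \<noteq> h (e 2 0 S)" by (rule adj) (auto simp: \<sigma>_def e_def)
  have q2: "h (e 2 0 S) = h (\<lambda>_. 2)" using pair[of 2 0 S] \<open>P S\<close> by simp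
  have p3: "h \<sigma> \<noteq> h (e 0 1 (-R))" by (rule adj) (use assms(2) in \<open>auto simp: \<sigma>_def e_def\<close>)
  have q3: "h (e 0 1 (-R)) = h (\<lambda>_. 0)" using PR by (simp add: P_def)
  show False using al_cover[OF rng[OF v]] p1 q1 p2 q2 p3 q3 by metis
qed

lemma inter: assumes "P S" "P T" shows "P (S \<inter> T)"
proof (rule ccontr)
  assume "\<not> P (S \<inter> T)"
  hence PR: "P (-(S \<inter> T))" using compl[of "S \<inter> T"] by blast
  define \<sigma> where "\<sigma> = (\<lambda>j. if j \<notin> S then 0 else if j \<notin> T then 1 else (2::nat))"
  have v: "\<forall>i<n. \<sigma> i < 3" by (simp add: \<sigma>_def)
  have p1: "h \<sigma> \<noteq> h (e 0 1 S)" by (rule adj) (auto simp: \<sigma>_def e_def)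
  have q1: "h (e 0 1 S) = h (\<lambda>_. 0)" using \<open>P S\<close> by (simp add: P_def)
  have p2: "h \<sigma> \<noteq> h (e 1 2 T)" by (rule adj) (auto simp: \<sigma>_def e_def)
  have q2: "h (e 1 2 T) = h (\<lambda>_. 1)" using pair[of 1 2 T] \<open>P T\<close> by simp
  have p3: "h \<sigma> \<noteq> h (e 2 0 (-(S \<inter> T)))" by (rule adj) (auto simp: \<sigma>_def e_def)
  have q3: "h (e 2 0 (-(S \<inter> T))) = h (\<lambda>_. 2)" using pair[of 2 0 "-(S \<inter> T)"] PR by simp
  show False using al_cover[OF rng[OF v]] p1 q1 p2 q2 p3 q3 by metis
qed

lemma inter_fin: "finite F \<Longrightarrow> (\<forall>S\<in>F. P S) \<Longrightarrow> P (\<Inter>F)"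
proof (induction F rule: finite_induct)
  case empty
  then show ?case using compl[of "{}"] P_empty by simp
next
  case (insert x F)
  then show ?case using inter by simp
qed

lemma principal: "\<exists>i<n. P {i}"
proof (rule ccontr)
  assume "\<not> ?thesis"
  then have "\<forall>S\<in>(\<lambda>i. -{i}) ` {..<n}. P S" using compl by auto
  then have "P (\<Inter>((\<lambda>i. -{i}) ` {..<n}))" by (intro inter_fin) auto
  moreover have "P (\<Inter>((\<lambda>i. -{i}) ` {..<n})) = P {}" by (rule P_cong) auto
  ultimately show False using P_empty by simp
qed

lemma Pchar: assumes "P {i}" shows "P S = (i \<in> S)"
proof
  assume "P S"
  show "i \<in> S"
  proof (rule ccontr)
    assume "i \<notin> S"
    then have "P (-{i})" using up[OF \<open>P S\<close>] by auto
    then show False using compl assms by simp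
  qed
next
  assume "i \<in> S" then show "P S" using up[OF assms] by auto
qed

lemma main: "\<exists>i<n. \<forall>\<sigma>. (\<forall>j<n. \<sigma> j < 3) \<longrightarrow> h \<sigma> = h (\<lambda>_. \<sigma> i)"
proof -
  obtain i where i: "i < n" "P {i}" using principal by blast
  have "h \<sigma> = h (\<lambda>_. \<sigma> i)" if v: "\<forall>j<n. \<sigma> j < 3" for \<sigma>
  proof (rule ccontr)
    assume ne: "h \<sigma> \<noteq> h (\<lambda>_. \<sigma> i)"
    obtain j where j: "j < n" "h \<sigma> = h (\<lambda>_. \<sigma> j)" using cons[OF v] by blast
    define vv where "vv = \<sigma> j"
    define w where "w = (if vv = 0 then 1 else (0::nat))"
    have vv3: "vv < 3" using v j vv_def by simp
    have w3: "w < 3" "w \<noteq> vv" by (auto simp: w_def)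
    have "\<sigma> i \<noteq> vv" using ne j vv_def by auto
    then have "\<not> P {k. \<sigma> k = vv}" using Pchar[OF i(2)] by simp
    then have "h (e w vv {k. \<sigma> k = vv}) \<noteq> h (\<lambda>_. w)" using pair[OF w3(1) vv3 w3(2)] by simp
    then have "h (e w vv {k. \<sigma> k = vv}) = h \<sigma>" using cons2[OF w3(1) vv3, of "{k. \<sigma> k = vv}"] j vv_def by simp
    moreover have "h \<sigma> \<noteq> h (e w vv {k. \<sigma> k = vv})"
      by (rule adj) (use v vv3 w3 in \<open>auto simp: e_def\<close>)
    ultimately show False by simp
  qed
  then show ?thesis using i by blast
qed

end



lemma col_compact:
  fixes I :: "'b set" and E :: "'b \<Rightarrow> 'b \<Rightarrow> bool"
  assumes fin: "\<And>F. finite F \<Longrightarrow> F \<subseteq> I \<Longrightarrow> \<exists>c::'b\<Rightarrow>nat. (\<forall>v\<in>F. c v < 3) \<and> (\<forall>u\<in>F. \<forall>v\<in>F. E u v \<longrightarrow> c u \<noteq> c v)"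
  shows "\<exists>c::'b\<Rightarrow>nat. (\<forall>v\<in>I. c v < 3) \<and> (\<forall>u\<in>I. \<forall>v\<in>I. E u v \<longrightarrow> c u \<noteq> c v)"
proof -
  define X where "X = product_topology (\<lambda>_. discrete_topology {0..<3::nat}) I"
  have cX: "compact_space X" unfolding X_def
    by (simp add: compact_space_product_topology compact_space_discrete_topology)
  define K where "K = (\<lambda>(u,v). {c \<in> topspace X. c u \<noteq> c v})"
  define Ed where "Ed = {(u,v). u \<in> I \<and> v \<in> I \<and> E u v}"
  define U where "U = insert (topspace X) (K ` Ed)"
  have proj: "continuous_map X (discrete_topology {0..<3::nat}) (\<lambda>c. c u)" if "u \<in> I" for u
    unfolding X_def using continuous_map_product_projection[OF that, of "\<lambda>_. discrete_topology {0..<3::nat}"] by simp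
  have cl: "closedin X C" if "C \<in> U" for C
  proof -
    { fix u v assume uv: "(u,v) \<in> Ed"
      then have u: "u \<in> I" and v: "v \<in> I" by (auto simp: Ed_def)
      have op: "openin X {c \<in> topspace X. c u = a \<and> c v = a}" for a
      proof -
        have "openin X ({c \<in> topspace X. c u \<in> {a} \<inter> {0..<3}} \<inter> {c \<in> topspace X. c v \<in> {a} \<inter> {0..<3}})"
          using openin_continuous_map_preimage[OF proj[OF u], of "{a} \<inter> {0..<3}"]
            openin_continuous_map_preimage[OF proj[OF v], of "{a} \<inter> {0..<3}"]
          by (intro openin_Int) auto
        moreover have "{c \<in> topspace X. c u \<in> {a} \<inter> {0..<3}} \<inter> {c \<in> topspace X. c v \<in> {a} \<inter> {0..<3}}
            = {c \<in> topspace X. c u = a \<and> c v = a}"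
          using u v by (auto simp: X_def PiE_iff)
        ultimately show ?thesis by simp
      qed
      have "openin X (\<Union>a. {c \<in> topspace X. c u = a \<and> c v = a})"
        by (intro openin_Union) (auto intro: op)
      then have "closedin X (topspace X - (\<Union>a. {c \<in> topspace X. c u = a \<and> c v = a}))"
        by (intro closedin_diff) auto
      moreover have "topspace X - (\<Union>a. {c \<in> topspace X. c u = a \<and> c v = a}) = K (u,v)"
        by (auto simp: K_def)
      ultimately have "closedin X (K (u,v))" by simp }
    then show ?thesis using that by (auto simp: U_def)
  qed
  have fip: "\<Inter>\<F> \<noteq> {}" if "finite \<F>" "\<F> \<subseteq> U" for \<F>
  proof -
    have sub: "\<F> - {topspace X} \<subseteq> K ` Ed" using that by (auto simp: U_def)
    have fF: "finite (\<F> - {topspace X})" using that(1) by simp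
    obtain D where D: "D \<subseteq> Ed" "finite D" "\<F> - {topspace X} \<subseteq> K ` D"
      using finite_subset_image[OF fF sub] by (elim exE conjE) (rule that, assumption+, simp)
    define F where "F = fst ` D \<union> snd ` D"
    have "finite F" "F \<subseteq> I" using D by (auto simp: F_def Ed_def)
    then obtain c :: "'b \<Rightarrow> nat" where c: "\<forall>v\<in>F. c v < 3" "\<forall>u\<in>F. \<forall>v\<in>F. E u v \<longrightarrow> c u \<noteq> c v"
      using fin[of F] by blast
    define p where "p = restrict (\<lambda>v. if v \<in> F then c v else 0) I"
    have pt: "p \<in> topspace X" using c by (auto simp: X_def p_def PiE_iff)
    have "p \<in> K d" if "d \<in> D" for d
    proof -
      obtain u v where d: "d = (u,v)" by fastforce
      have uvD: "(u,v) \<in> D" using that d by simp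
      then have "(u,v) \<in> Ed" using D(1) by blast
      then have "u \<in> I" "v \<in> I" "E u v" by (simp_all add: Ed_def)
      moreover have "u \<in> F" unfolding F_def using uvD by (metis UnI1 fst_conv image_eqI)
      moreover have "v \<in> F" unfolding F_def using uvD by (metis UnI2 snd_conv image_eqI)
      ultimately have "u \<in> F" "v \<in> F" "u \<in> I" "v \<in> I" "E u v" by auto
      then show ?thesis using pt c d by (auto simp: K_def p_def)
    qed
    then have "p \<in> C" if "C \<in> \<F>" for C
    proof (cases "C = topspace X")
      case True then show ?thesis using pt by simp
    next
      case False
      with that D(3) obtain d where "d \<in> D" "C = K d" by blast
      then show ?thesis using \<open>\<And>d. d \<in> D \<Longrightarrow> p \<in> K d\<close> by simp
    qed
    then have "p \<in> \<Inter>\<F>" by (rule InterI)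
    then show ?thesis by blast
  qed
  have "\<Inter>U \<noteq> {}"
    using cX[unfolded compact_space_fip, rule_format, of U] cl fip by auto
  then obtain c :: "'b \<Rightarrow> nat" where c: "c \<in> \<Inter>U" by blast
  then have ct: "c \<in> topspace X" by (auto simp: U_def)
  have "\<forall>v\<in>I. c v < 3" using ct by (auto simp: X_def PiE_iff)
  moreover have "\<forall>u\<in>I. \<forall>v\<in>I. E u v \<longrightarrow> c u \<noteq> c v"
  proof (intro ballI impI)
    fix u v assume "u \<in> I" "v \<in> I" "E u v"
    then have "K (u,v) \<in> U" by (auto simp: U_def Ed_def)
    then show "c u \<noteq> c v" using c by (auto simp: K_def)
  qed
  ultimately show ?thesis by blast
qed



lemma minor_app: "length xs = k \<Longrightarrow> set xs \<subseteq> A \<Longrightarrow> minor A n k \<pi> f xs = f (map (\<lambda>i. xs ! \<pi> i) [0..<n])"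
  by (simp add: minor_def restr_def)

lemma clone_proj: "clone A C \<Longrightarrow> i < n \<Longrightarrow> proj A n i \<in> C n"
  unfolding clone_def by blast

lemma clone_comp: "clone A C \<Longrightarrow> f \<in> C n \<Longrightarrow> (\<forall>i<n. gs i \<in> C m) \<Longrightarrow> Defs.compose A n m f gs \<in> C m"
  unfolding clone_def by blast

lemma minor_in: assumes "clone A C" "f \<in> C n" "\<forall>i<n. \<pi> i < k" shows "minor A n k \<pi> f \<in> C k"
proof -
  have "Defs.compose A n k f (\<lambda>i. proj A k (\<pi> i)) \<in> C k"
    using assms by (intro clone_comp allI impI clone_proj) auto
  moreover have "Defs.compose A n k f (\<lambda>i. proj A k (\<pi> i)) = minor A n k \<pi> f"
  proof (rule ext)
    fix xs
    show "Defs.compose A n k f (\<lambda>i. proj A k (\<pi> i)) xs = minor A n k \<pi> f xs"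
    proof (cases "length xs = k \<and> set xs \<subseteq> A")
      case True
      then have "map (\<lambda>i. proj A k (\<pi> i) xs) [0..<n] = map (\<lambda>i. xs ! \<pi> i) [0..<n]"
        by (simp add: proj_def restr_def)
      then show ?thesis using True by (simp add: Defs.compose_def minor_def restr_def del: map_eq_conv)
    next
      case False
      then show ?thesis unfolding Defs.compose_def minor_def restr_def by (simp only: if_not_P if_False)
    qed
  qed
  ultimately show ?thesis by simp
qed

lemma minor_minor: assumes "\<forall>i<n. \<pi> i < k" "\<forall>j<k. \<sigma> j < m"
  shows "minor A k m \<sigma> (minor A n k \<pi> f) = minor A n m (\<sigma> \<circ> \<pi>) f"
proof (rule ext)
  fix xs
  show "minor A k m \<sigma> (minor A n k \<pi> f) xs = minor A n m (\<sigma> \<circ> \<pi>) f xs"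
  proof (cases "length xs = m \<and> set xs \<subseteq> A")
    case True
    let ?ys = "map (\<lambda>j. xs ! \<sigma> j) [0..<k]"
    have "set ?ys \<subseteq> A"
    proof
      fix y assume "y \<in> set ?ys"
      then obtain j where "j < k" "y = xs ! \<sigma> j" by auto
      then have "y \<in> set xs" using True assms(2) by simp
      then show "y \<in> A" using True by blast
    qed
    moreover have "length ?ys = k" by simp
    ultimately have "minor A n k \<pi> f ?ys = f (map (\<lambda>i. ?ys ! \<pi> i) [0..<n])" using minor_app[of ?ys k A n \<pi> f] by blast
    also have "map (\<lambda>i. ?ys ! \<pi> i) [0..<n] = map (\<lambda>i. xs ! \<sigma> (\<pi> i)) [0..<n]"
      using assms(1) by simp
    finally have eq: "minor A n k \<pi> f ?ys = f (map (\<lambda>i. xs ! \<sigma> (\<pi> i)) [0..<n])" .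
    have "minor A k m \<sigma> (minor A n k \<pi> f) xs = minor A n k \<pi> f ?ys"
      using True minor_app[of xs m A k \<sigma> "minor A n k \<pi> f"] by blast
    also have "\<dots> = f (map (\<lambda>i. xs ! (\<sigma> \<circ> \<pi>) i) [0..<n])" using eq by simp
    also have "\<dots> = minor A n m (\<sigma> \<circ> \<pi>) f xs"
      using True minor_app[of xs m A n "\<sigma> \<circ> \<pi>" f] by simp
    finally show ?thesis .
  next
    case False
    then show ?thesis unfolding minor_def restr_def by (simp only: if_not_P if_False)
  qed
qed

lemma map6: "map F [0..<6] = [F 0, F 1, F 2, F 3, F 4, F 5]"
  by (simp add: upt_rec numeral_eq_Suc)

lemma map3: "map F [0..<3] = [F 0, F 1, F 2]"
  by (simp add: upt_rec numeral_eq_Suc)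

definition Hedge :: "'a set \<Rightarrow> (nat \<Rightarrow> ('a list \<Rightarrow> 'a) set) \<Rightarrow> ('a list \<Rightarrow> 'a) \<Rightarrow> ('a list \<Rightarrow> 'a) \<Rightarrow> bool" where
  "Hedge A C f1 f2 \<longleftrightarrow> (\<exists>g\<in>C 6. \<forall>x\<in>A. \<forall>y\<in>A. \<forall>z\<in>A.
      f1 [x,y,z] = g [x,y,x,z,y,z] \<and> f2 [x,y,z] = g [y,x,z,x,z,y])"

lemma Hedge_sym: assumes "clone A C" "Hedge A C f1 f2" shows "Hedge A C f2 f1"
proof -
  obtain g where g: "g \<in> C 6" "\<forall>x\<in>A. \<forall>y\<in>A. \<forall>z\<in>A. f1 [x,y,z] = g [x,y,x,z,y,z] \<and> f2 [x,y,z] = g [y,x,z,x,z,y]"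
    using assms(2) unfolding Hedge_def by blast
  define sw where "sw = (\<lambda>i. [1,0,3,2,5,4::nat] ! i)"
  have "sw i < 6" if "i < 6" for i
  proof -
    have "[1,0,3,2,5,4::nat] ! i \<in> set [1,0,3,2,5,4::nat]" using that by (intro nth_mem) simp
    then show ?thesis by (auto simp: sw_def)
  qed
  then have g': "minor A 6 6 sw g \<in> C 6" using minor_in[OF assms(1) g(1)] by blast
  have sw: "sw 0 = 1" "sw 1 = 0" "sw 2 = 3" "sw 3 = 2" "sw 4 = 5" "sw 5 = 4" "sw (Suc 0) = 0" by (simp_all add: sw_def)
  have e: "minor A 6 6 sw g [x,y,x,z,y,z] = g [y,x,z,x,z,y] \<and> minor A 6 6 sw g [y,x,z,x,z,y] = g [x,y,x,z,y,z]"
    if "x \<in> A" "y \<in> A" "z \<in> A" for x y z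
    using that by (simp add: minor_app map6 sw)
  show ?thesis unfolding Hedge_def
  proof (rule bexI[OF _ g'], intro ballI conjI)
    fix x y z assume "x \<in> A" "y \<in> A" "z \<in> A"
    then show "f2 [x, y, z] = minor A 6 6 sw g [x, y, x, z, y, z]" "f1 [x, y, z] = minor A 6 6 sw g [y, x, z, x, z, y]"
      using g(2) e by auto
  qed
qed

definition pidx :: "nat \<Rightarrow> nat \<Rightarrow> nat" where
  "pidx a b = (if a = 0 \<and> b = 1 then 0 else if a = 1 \<and> b = 0 then 1 else if a = 0 then 2
     else if a = 2 \<and> b = 0 then 3 else if a = 1 then 4 else 5)"

lemma three: "(a::nat) < 3 \<Longrightarrow> a = 0 \<or> a = 1 \<or> a = 2" by presburger

lemma pidx: assumes "a < 3" "b < 3" "a \<noteq> b"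
  shows "pidx a b < 6 \<and> [x,y,x,z,y,z] ! pidx a b = [x,y,z] ! a \<and> [y,x,z,x,z,y] ! pidx a b = [x,y,z] ! b"
proof -
  from three[OF assms(1)] three[OF assms(2)] assms(3) show ?thesis
    by (elim disjE) (simp_all add: pidx_def)
qed

definition isc :: "nat \<Rightarrow> ((nat \<Rightarrow> nat) \<Rightarrow> nat) \<Rightarrow> nat \<Rightarrow> bool" where
  "isc n h i \<longleftrightarrow> i < n \<and> (\<forall>\<sigma>. (\<forall>j<n. \<sigma> j < 3) \<longrightarrow> h \<sigma> = h (\<lambda>_. \<sigma> i))"

lemma isc_unique: assumes "k3 n h" "isc n h i" "isc n h j" shows "i = j"
proof (rule ccontr)
  assume ij: "i \<noteq> j"
  define \<sigma> where "\<sigma> = (\<lambda>k. if k = i then 0 else (1::nat))"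
  have v: "\<forall>k<n. \<sigma> k < 3" by (simp add: \<sigma>_def)
  have "h \<sigma> = h (\<lambda>_. \<sigma> i)" using assms(2) v unfolding isc_def by blast
  then have "h \<sigma> = h (\<lambda>_. 0)" by (simp add: \<sigma>_def)
  moreover have "h \<sigma> = h (\<lambda>_. \<sigma> j)" using assms(3) v unfolding isc_def by blast
  then have "h \<sigma> = h (\<lambda>_. 1)" using ij by (simp add: \<sigma>_def)
  moreover have "h (\<lambda>_. 0) \<noteq> h (\<lambda>_. 1)" using k3.al_inj[OF assms(1), of 0 1] by simp
  ultimately show False by simp
qed

lemma isc_ex1: assumes "k3 n h" shows "\<exists>!i. isc n h i"
proof -
  obtain i where "i < n" "\<forall>\<sigma>. (\<forall>j<n. \<sigma> j < 3) \<longrightarrow> h \<sigma> = h (\<lambda>_. \<sigma> i)"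
    using k3.main[OF assms] by blast
  then have "isc n h i" unfolding isc_def by blast
  then show ?thesis using isc_unique[OF assms] by blast
qed

lemma hom_from_col:
  assumes cl: "clone A C"
    and c3: "\<forall>f\<in>C 3. c f < (3::nat)"
    and cp: "\<forall>f1\<in>C 3. \<forall>f2\<in>C 3. Hedge A C f1 f2 \<longrightarrow> c f1 \<noteq> c f2"
  shows "\<exists>\<xi>. minion_hom A C (UNIV :: bool set) proj_clone \<xi>"
proof -
  define hf where "hf = (\<lambda>n f \<sigma>. c (minor A n 3 \<sigma> f))"
  have K: "k3 n (hf n f)" if f: "f \<in> C n" for n f
  proof
    fix \<sigma> \<tau> :: "nat \<Rightarrow> nat"
    assume "\<forall>i<n. \<sigma> i = \<tau> i"
    then have "map (\<lambda>i. xs ! \<sigma> i) [0..<n] = map (\<lambda>i. xs ! \<tau> i) [0..<n]" for xs :: "'a list"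
      by simp
    then have "minor A n 3 \<sigma> f = minor A n 3 \<tau> f" unfolding minor_def by (simp only:)
    then show "hf n f \<sigma> = hf n f \<tau>" by (simp add: hf_def)
  next
    fix \<sigma> :: "nat \<Rightarrow> nat"
    assume "\<forall>i<n. \<sigma> i < 3"
    then have "minor A n 3 \<sigma> f \<in> C 3" using minor_in[OF cl f] by blast
    then show "hf n f \<sigma> < 3" using c3 by (simp add: hf_def)
  next
    fix \<sigma> \<tau> :: "nat \<Rightarrow> nat"
    assume s: "\<forall>i<n. \<sigma> i < 3" and t: "\<forall>i<n. \<tau> i < 3" and st: "\<forall>i<n. \<sigma> i \<noteq> \<tau> i"
    define \<rho> where "\<rho> = (\<lambda>i. pidx (\<sigma> i) (\<tau> i))"
    have r6: "\<forall>i<n. \<rho> i < 6"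
    proof (intro allI impI)
      fix i assume "i < n" then show "\<rho> i < 6" using pidx[of "\<sigma> i" "\<tau> i" "0::nat" 0 0] s t st by (simp add: \<rho>_def)
    qed
    have g: "minor A n 6 \<rho> f \<in> C 6" using minor_in[OF cl f r6] .
    have "Hedge A C (minor A n 3 \<sigma> f) (minor A n 3 \<tau> f)"
      unfolding Hedge_def
    proof (rule bexI[OF _ g], intro ballI conjI)
      fix x y z assume xyz: "x \<in> A" "y \<in> A" "z \<in> A"
      have "map (\<lambda>i. [x,y,z] ! \<sigma> i) [0..<n] = map (\<lambda>i. [x,y,x,z,y,z] ! \<rho> i) [0..<n]"
      proof (rule map_cong[OF refl])
        fix i assume "i \<in> set [0..<n]" then have "i < n" by simp
        then show "[x,y,z] ! \<sigma> i = [x,y,x,z,y,z] ! \<rho> i"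
          using pidx[of "\<sigma> i" "\<tau> i" x y z] s t st by (simp add: \<rho>_def)
      qed
      then show "minor A n 3 \<sigma> f [x, y, z] = minor A n 6 \<rho> f [x, y, x, z, y, z]"
        using xyz minor_app[of "[x,y,z]" 3 A n \<sigma> f] minor_app[of "[x, y, x, z, y, z]" 6 A n \<rho> f] by (simp del: map_eq_conv)
      have "map (\<lambda>i. [x,y,z] ! \<tau> i) [0..<n] = map (\<lambda>i. [y,x,z,x,z,y] ! \<rho> i) [0..<n]"
      proof (rule map_cong[OF refl])
        fix i assume "i \<in> set [0..<n]" then have "i < n" by simp
        then show "[x,y,z] ! \<tau> i = [y,x,z,x,z,y] ! \<rho> i"
          using pidx[of "\<sigma> i" "\<tau> i" x y z] s t st by (simp add: \<rho>_def)
      qed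
      then show "minor A n 3 \<tau> f [x, y, z] = minor A n 6 \<rho> f [y, x, z, x, z, y]"
        using xyz minor_app[of "[x,y,z]" 3 A n \<tau> f] minor_app[of "[y, x, z, x, z, y]" 6 A n \<rho> f] by (simp del: map_eq_conv)
    qed
    moreover have "minor A n 3 \<sigma> f \<in> C 3" "minor A n 3 \<tau> f \<in> C 3"
      using minor_in[OF cl f] s t by auto
    ultimately show "hf n f \<sigma> \<noteq> hf n f \<tau>" using cp by (simp add: hf_def)
  qed
  define crd where "crd = (\<lambda>n f. THE i. isc n (hf n f) i)"
  have crd: "isc n (hf n f) (crd n f)" if "f \<in> C n" for n f
    unfolding crd_def using isc_ex1[OF K[OF that]] by (rule theI')
  define \<xi> where "\<xi> = (\<lambda>n f. proj (UNIV :: bool set) n (crd n f))"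
  have "minion_hom A C (UNIV :: bool set) proj_clone \<xi>"
    unfolding minion_hom_def
  proof (intro conjI allI impI)
    fix n f assume "f \<in> C n"
    then have "crd n f < n" using crd unfolding isc_def by blast
    then show "\<xi> n f \<in> proj_clone n" by (auto simp: \<xi>_def proj_clone_def)
  next
    fix n k :: nat and \<pi> :: "nat \<Rightarrow> nat" and f assume f: "f \<in> C n" and \<pi>: "\<forall>i<n. \<pi> i < k"
    define i where "i = crd n f"
    have ci: "isc n (hf n f) i" using crd[OF f] by (simp add: i_def)
    have fm: "minor A n k \<pi> f \<in> C k" using minor_in[OF cl f \<pi>] .
    have "isc k (hf k (minor A n k \<pi> f)) (\<pi> i)"
      unfolding isc_def
    proof (intro conjI allI impI)
      show "\<pi> i < k" using ci \<pi> unfolding isc_def by blast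
    next
      fix \<sigma> :: "nat \<Rightarrow> nat" assume s: "\<forall>j<k. \<sigma> j < 3"
      have s': "\<forall>j<n. (\<sigma> \<circ> \<pi>) j < 3" using s \<pi> by simp
      have c1: "\<forall>j<k. (\<lambda>_. \<sigma> (\<pi> i)) j < (3::nat)" using s ci \<pi> unfolding isc_def by blast
      have "hf k (minor A n k \<pi> f) \<sigma> = hf n f (\<sigma> \<circ> \<pi>)"
        by (simp add: hf_def minor_minor[OF \<pi> s])
      also have "\<dots> = hf n f (\<lambda>_. (\<sigma> \<circ> \<pi>) i)" using ci s' unfolding isc_def by blast
      also have "\<dots> = hf k (minor A n k \<pi> f) (\<lambda>_. \<sigma> (\<pi> i))"
        by (simp add: hf_def minor_minor[OF \<pi> c1] comp_def)
      finally show "hf k (minor A n k \<pi> f) \<sigma> = hf k (minor A n k \<pi> f) (\<lambda>_. \<sigma> (\<pi> i))" .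
    qed
    then have "crd k (minor A n k \<pi> f) = \<pi> i"
      using isc_unique[OF K[OF fm] crd[OF fm]] by simp
    moreover have "proj (UNIV :: bool set) k (\<pi> i) = minor UNIV n k \<pi> (proj UNIV n i)"
    proof -
      have "i < n" using ci unfolding isc_def by blast
      then show ?thesis by (auto simp: proj_def minor_def restr_def)
    qed
    ultimately show "\<xi> k (minor A n k \<pi> f) = minor UNIV n k \<pi> (\<xi> n f)"
      by (simp add: \<xi>_def i_def)
  qed
  then show ?thesis by blast
qed




theorem lemma3p5:
  fixes A :: "'a set" and C :: "nat \<Rightarrow> ('a list \<Rightarrow> 'a) set"
  assumes "clone A C"
    and "\<not> (\<exists>\<xi>. minion_hom A C (UNIV :: bool set) proj_clone \<xi>)"
  shows "\<exists>(V :: nat set) E. graph V E \<and> \<not> three_colorable V E \<and> satisfies_Sigma A C V E"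
proof (rule ccontr)
  assume nc: "\<not> ?thesis"
  have fin: "\<exists>c::('a list \<Rightarrow> 'a)\<Rightarrow>nat. (\<forall>v\<in>F. c v < 3) \<and> (\<forall>u\<in>F. \<forall>v\<in>F. Hedge A C u v \<longrightarrow> c u \<noteq> c v)"
    if F: "finite F" "F \<subseteq> C 3" for F
  proof (rule ccontr)
    assume ncol: "\<not> ?thesis"
    obtain b where b: "bij_betw b {0..<card F} F" using ex_bij_betw_nat_finite[OF F(1)] by blast
    define V where "V = {0..<card F}"
    define E where "E = {(i,j). i \<in> V \<and> j \<in> V \<and> Hedge A C (b i) (b j)}"
    have bF: "b i \<in> F" if "i \<in> V" for i using b that unfolding V_def bij_betw_def by blast
    have g: "graph V E"
      unfolding graph_def
    proof (intro conjI)
      show "finite V" by (simp add: V_def)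
      show "E \<subseteq> V \<times> V" by (auto simp: E_def)
      show "sym E" unfolding sym_def E_def using Hedge_sym[OF assms(1)] by blast
    qed
    have n3: "\<not> three_colorable V E"
    proof
      assume "three_colorable V E"
      then obtain c :: "nat \<Rightarrow> nat" where c: "\<forall>v\<in>V. c v < 3" "\<forall>(u,v)\<in>E. c u \<noteq> c v"
        unfolding three_colorable_def by blast
      define c' where "c' = (\<lambda>f. c (inv_into V b f))"
      have iv: "inv_into V b f \<in> V" "b (inv_into V b f) = f" if "f \<in> F" for f
      proof -
        have fb: "f \<in> b ` V" using b that unfolding V_def bij_betw_def by auto
        show "inv_into V b f \<in> V" by (rule inv_into_into[OF fb])
        show "b (inv_into V b f) = f" by (rule f_inv_into_f[OF fb])
      qed
      have "\<forall>v\<in>F. c' v < 3" using iv c(1) by (simp add: c'_def)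
      moreover have "\<forall>u\<in>F. \<forall>v\<in>F. Hedge A C u v \<longrightarrow> c' u \<noteq> c' v"
      proof (intro ballI impI)
        fix u v assume uv: "u \<in> F" "v \<in> F" "Hedge A C u v"
        then have "(inv_into V b u, inv_into V b v) \<in> E" using iv by (simp add: E_def)
        then show "c' u \<noteq> c' v" using c(2) by (auto simp: c'_def)
      qed
      ultimately show False using ncol by blast
    qed
    define G where "G = (\<lambda>(i,j). SOME g. g \<in> C 6 \<and> (\<forall>x\<in>A. \<forall>y\<in>A. \<forall>z\<in>A.
        b i [x,y,z] = g [x,y,x,z,y,z] \<and> b j [x,y,z] = g [y,x,z,x,z,y]))"
    have Gp: "G (i,j) \<in> C 6 \<and> (\<forall>x\<in>A. \<forall>y\<in>A. \<forall>z\<in>A.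
        b i [x,y,z] = G (i,j) [x,y,x,z,y,z] \<and> b j [x,y,z] = G (i,j) [y,x,z,x,z,y])" if "(i,j) \<in> E" for i j
    proof -
      have "Hedge A C (b i) (b j)" using that by (simp add: E_def)
      then have "\<exists>g. g \<in> C 6 \<and> (\<forall>x\<in>A. \<forall>y\<in>A. \<forall>z\<in>A.
        b i [x,y,z] = g [x,y,x,z,y,z] \<and> b j [x,y,z] = g [y,x,z,x,z,y])" unfolding Hedge_def by blast
      then show ?thesis unfolding G_def case_prod_conv by (rule someI_ex)
    qed
    have s: "satisfies_Sigma A C V E"
      unfolding satisfies_Sigma_def
    proof (intro exI[of _ b] exI[of _ G] conjI)
      show "\<forall>v\<in>V. b v \<in> C 3" using bF F(2) by blast
      show "\<forall>e\<in>E. G e \<in> C 6" using Gp by auto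
      show "\<forall>(u,v)\<in>E. \<forall>x\<in>A. \<forall>y\<in>A. \<forall>z\<in>A. b u [x,y,z] = G (u,v) [x,y,x,z,y,z] \<and> b v [x,y,z] = G (u,v) [y,x,z,x,z,y]"
        using Gp by blast
    qed
    show False using nc g n3 s by blast
  qed
  obtain c :: "('a list \<Rightarrow> 'a) \<Rightarrow> nat" where c: "\<forall>v\<in>C 3. c v < 3" "\<forall>u\<in>C 3. \<forall>v\<in>C 3. Hedge A C u v \<longrightarrow> c u \<noteq> c v"
    using col_compact[of "C 3" "Hedge A C"] fin by blast
  show False using hom_from_col[OF assms(1) c] assms(2) by blast
qed


end
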